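(* Let $(\Omega,\mathcal{F})$ be a measurable space and $T:\Omega\to\Omega$ a measurable map. Let $\mathbb{V}(A)=\sup_{P\in\Theta}P(A)$, $A\in\mathcal{F}$, be an upper probability, where $\Theta=\{P \text{ probability on }(\Omega,\mathcal{F}) : P(A)\le \mathbb{V}(A)\ \forall A\in\mathcal{F}\}$. Assume $\mathbb{V}$ is continuous (from above), $T$-invariant, and $T$-ergodic. Let $\Theta_0$ (resp. $\Theta_*$) be the set of $T$-invariant (resp. $T$-ergodic) probabilities in $\Theta$. Then $\Theta_*$ is a finite set, and $\Theta_0=\operatorname{co}\Theta_*$, the convex hull of $\Theta_*$.
   Context: $\mathcal{I}=\{A\in\mathcal{F}: T^{-1}A=A\}$ is the $T$-invariant $\sigma$-algebra. $\mathbb{V}$ is continuous if $\mathbb{V}(A_n)\to 0$ whenever $A_n\in\mathcal{F}$, $A_n\downarrow\emptyset$. $\mathbb{V}$ is $T$-invariant if $\mathbb{V}(T^{-1}A)=\mathbb{V}(A)$ for all $A\in\mathcal{F}$. A continuous upper probability $\mathbb{V}$ is $T$-ergodic if $\mathbb{V}(A)\in\{0,1\}$ for every $A\in\mathcal{I}$. A probability $P$ is $T$-invariant if $P(T^{-1}A)=P(A)$ for all $A\in\mathcal{F}$, and $T$-ergodic if it is $T$-invariant and $P(A)\in\{0,1\}$ for all $A\in\mathcal{I}$. *)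

theory Defs
  imports "HOL-Probability.Probability"
begin

text \<open>Probabilities on the measurable space underlying M (only sets M matters).\<close>
definition probs_on :: "'a measure \<Rightarrow> 'a measure set" where
  "probs_on M = {P. prob_space P \<and> sets P = sets M}"

definition core :: "'a measure \<Rightarrow> ('a set \<Rightarrow> real) \<Rightarrow> 'a measure set" where
  "core M V = {P \<in> probs_on M. \<forall>A\<in>sets M. measure P A \<le> V A}"

definition upper_probability :: "'a measure \<Rightarrow> ('a set \<Rightarrow> real) \<Rightarrow> bool" where
  "upper_probability M V \<longleftrightarrow> core M V \<noteq> {} \<and>
     (\<forall>A\<in>sets M. V A = (SUP P\<in>core M V. measure P A))"

definition continuous_capacity :: "'a measure \<Rightarrow> ('a set \<Rightarrow> real) \<Rightarrow> bool" where
  "continuous_capacity M V \<longleftrightarrow>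
     (\<forall>An. (\<forall>n. An n \<in> sets M) \<longrightarrow> decseq An \<longrightarrow> (\<Inter>n. An n) = {} \<longrightarrow>
        (\<lambda>n. V (An n)) \<longlonglongrightarrow> 0)"

definition invariant_sets :: "'a measure \<Rightarrow> ('a \<Rightarrow> 'a) \<Rightarrow> 'a set set" where
  "invariant_sets M T = {A \<in> sets M. T -` A \<inter> space M = A}"

definition T_invariant_fun :: "'a measure \<Rightarrow> ('a \<Rightarrow> 'a) \<Rightarrow> ('a set \<Rightarrow> real) \<Rightarrow> bool" where
  "T_invariant_fun M T V \<longleftrightarrow> (\<forall>A\<in>sets M. V (T -` A \<inter> space M) = V A)"

definition T_ergodic_fun :: "'a measure \<Rightarrow> ('a \<Rightarrow> 'a) \<Rightarrow> ('a set \<Rightarrow> real) \<Rightarrow> bool" where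
  "T_ergodic_fun M T V \<longleftrightarrow> (\<forall>A\<in>invariant_sets M T. V A \<in> {0, 1})"

definition invariant_prob :: "'a measure \<Rightarrow> ('a \<Rightarrow> 'a) \<Rightarrow> 'a measure \<Rightarrow> bool" where
  "invariant_prob M T P \<longleftrightarrow> P \<in> probs_on M \<and> T_invariant_fun M T (measure P)"

definition ergodic_prob :: "'a measure \<Rightarrow> ('a \<Rightarrow> 'a) \<Rightarrow> 'a measure \<Rightarrow> bool" where
  "ergodic_prob M T P \<longleftrightarrow> invariant_prob M T P \<and> T_ergodic_fun M T (measure P)"

definition prob_convex_hull :: "'a measure \<Rightarrow> 'a measure set \<Rightarrow> 'a measure set" where
  "prob_convex_hull M S = {P \<in> probs_on M. \<exists>F c. finite F \<and> F \<subseteq> S \<and>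
      (\<forall>Q\<in>F. 0 \<le> c Q) \<and> (\<Sum>Q\<in>F. c Q) = (1::real) \<and>
      (\<forall>A\<in>sets M. measure P A = (\<Sum>Q\<in>F. c Q * measure Q A))}"

end

theory Submission
  imports Defs
begin

locale erg_setting =
  fixes M :: "'a measure" and T :: "'a \<Rightarrow> 'a" and V :: "'a set \<Rightarrow> real"
  assumes Tm: "T \<in> measurable M M"
    and upV: "upper_probability M V"
    and contV: "continuous_capacity M V"
    and invV: "T_invariant_fun M T V"
    and ergV: "T_ergodic_fun M T V"
begin

definition G :: "'a set \<Rightarrow> 'a set" where "G B = T -` B \<inter> space M"

definition Inv :: "'a set set" where "Inv = invariant_sets M T"

definition atom :: "'a set \<Rightarrow> bool" where
  "atom C \<longleftrightarrow> C \<in> Inv \<and> V C = 1 \<and> (\<forall>S\<in>Inv. S \<subseteq> C \<longrightarrow> V S = 0 \<or> V (C - S) = 0)"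

lemma G_sets: "B \<in> sets M \<Longrightarrow> G B \<in> sets M"
  unfolding G_def using Tm by (rule measurable_sets)

lemma Gn_sets: "B \<in> sets M \<Longrightarrow> (G ^^ n) B \<in> sets M"
  by (induction n) (auto intro: G_sets)

lemma T_space: "x \<in> space M \<Longrightarrow> T x \<in> space M"
  using Tm by (auto simp: measurable_def)

lemma G_space: "G (space M) = space M"
  using T_space unfolding G_def by auto

lemma G_sub: "G B \<subseteq> space M" unfolding G_def by auto

lemma V_G: "B \<in> sets M \<Longrightarrow> V (G B) = V B"
  using invV unfolding T_invariant_fun_def G_def by auto

lemma V_Gn: "B \<in> sets M \<Longrightarrow> V ((G ^^ n) B) = V B"
  by (induction n) (auto simp: V_G Gn_sets)

lemma Inv_sets: "A \<in> Inv \<Longrightarrow> A \<in> sets M"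
  unfolding Inv_def invariant_sets_def by auto

lemma Inv_G: "A \<in> Inv \<Longrightarrow> G A = A"
  unfolding Inv_def invariant_sets_def G_def by auto

lemma Inv_iff: "A \<in> Inv \<longleftrightarrow> A \<in> sets M \<and> G A = A"
  unfolding Inv_def invariant_sets_def G_def by auto

lemma Inv_sub: "A \<in> Inv \<Longrightarrow> A \<subseteq> space M"
  using Inv_sets sets.sets_into_space by blast

lemma G_diff: "G (A - B) = G A - G B" unfolding G_def by auto
lemma G_Int: "G (A \<inter> B) = G A \<inter> G B" unfolding G_def by auto
lemma G_Un: "G (A \<union> B) = G A \<union> G B" unfolding G_def by auto

lemma Inv_diff: "A \<in> Inv \<Longrightarrow> B \<in> Inv \<Longrightarrow> A - B \<in> Inv"
  by (auto simp: Inv_iff G_diff)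
lemma Inv_Int: "A \<in> Inv \<Longrightarrow> B \<in> Inv \<Longrightarrow> A \<inter> B \<in> Inv"
  by (auto simp: Inv_iff G_Int)
lemma Inv_Un: "A \<in> Inv \<Longrightarrow> B \<in> Inv \<Longrightarrow> A \<union> B \<in> Inv"
  by (auto simp: Inv_iff G_Un)
lemma Inv_space: "space M \<in> Inv"
  by (auto simp: Inv_iff G_space)

lemma Inv_erg: "A \<in> Inv \<Longrightarrow> V A = 0 \<or> V A = 1"
  using ergV unfolding T_ergodic_fun_def Inv_def by auto

lemma core_ne: "core M V \<noteq> {}"
  using upV unfolding upper_probability_def by auto

lemma V_SUP: "A \<in> sets M \<Longrightarrow> V A = (SUP P\<in>core M V. measure P A)"
  using upV unfolding upper_probability_def by auto

lemma core_D:
  assumes "P \<in> core M V"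
  shows "prob_space P" "sets P = sets M" "space P = space M"
    "\<And>A. A \<in> sets M \<Longrightarrow> measure P A \<le> V A"
  using assms unfolding core_def probs_on_def by (auto dest: sets_eq_imp_space_eq)

lemma bdd_core: "bdd_above ((\<lambda>P. measure P A) ` core M V)"
proof (rule bdd_aboveI[where M=1])
  fix x assume "x \<in> (\<lambda>P. measure P A) ` core M V"
  then obtain P where "P \<in> core M V" "x = measure P A" by auto
  then show "x \<le> 1" using core_D(1) prob_space.prob_le_1 by metis
qed

lemma V_nonneg: "A \<in> sets M \<Longrightarrow> 0 \<le> V A"
proof -
  assume A: "A \<in> sets M"
  obtain P where "P \<in> core M V" using core_ne by auto
  then show ?thesis using core_D(4)[OF _ A] measure_nonneg order_trans by metis
qed

lemma V_le1: "A \<in> sets M \<Longrightarrow> V A \<le> 1"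
  unfolding V_SUP
  by (rule cSUP_least[OF core_ne]) (metis core_D(1) prob_space.prob_le_1)

lemma V_mono: "A \<in> sets M \<Longrightarrow> B \<in> sets M \<Longrightarrow> A \<subseteq> B \<Longrightarrow> V A \<le> V B"
  unfolding V_SUP
proof (rule cSUP_mono[OF core_ne bdd_core])
  fix P assume A: "A \<in> sets M" "B \<in> sets M" "A \<subseteq> B" and P: "P \<in> core M V"
  have "measure P A \<le> measure P B"
  proof -
    interpret prob_space P using core_D(1)[OF P] .
    show ?thesis using core_D(2)[OF P] A by (intro finite_measure_mono) auto
  qed
  then show "\<exists>m\<in>core M V. measure P A \<le> measure m B" using P by auto
qed

lemma V_space: "V (space M) = 1"
proof -
  have "\<And>P. P \<in> core M V \<Longrightarrow> measure P (space M) = 1"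
    using core_D by (metis prob_space.prob_space)
  then have "(SUP P\<in>core M V. measure P (space M)) = 1"
    using core_ne by (simp add: cSUP_const cong: SUP_cong)
  then show ?thesis using V_SUP by simp
qed

lemma V_zero_null: "P \<in> core M V \<Longrightarrow> A \<in> sets M \<Longrightarrow> V A = 0 \<Longrightarrow> measure P A = 0"
  using core_D(4) measure_nonneg by (metis order_antisym)

lemma core_approx:
  assumes "A \<in> sets M" "e > 0"
  shows "\<exists>Q\<in>core M V. measure Q A > V A - e"
proof -
  have "V A - e < (SUP P\<in>core M V. measure P A)" using V_SUP[OF assms(1)] assms(2) by simp
  then show ?thesis using less_cSUP_iff[OF core_ne bdd_core] by blast
qed

lemma no_inf_disjoint:
  fixes X :: "nat \<Rightarrow> 'a set"
  assumes X: "\<And>n. X n \<in> Inv" "disjoint_family X" "\<And>n. V (X n) = 1"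
  shows False
proof -
  define B where "B n = (\<Union>k\<in>{n..}. X k)" for n
  have Bs: "B n \<in> sets M" for n unfolding B_def using X(1) Inv_sets by auto
  have "decseq B" unfolding decseq_def
  proof (intro allI impI)
    fix m n :: nat assume "m \<le> n"
    then show "B n \<subseteq> B m" unfolding B_def by (intro UN_mono) auto
  qed
  moreover have "(\<Inter>n. B n) = {}"
  proof (rule ccontr)
    assume "(\<Inter>n. B n) \<noteq> {}"
    then obtain x where x: "\<And>n. x \<in> B n" by auto
    from x[of 0] obtain k where k: "x \<in> X k" unfolding B_def by auto
    from x[of "Suc k"] obtain j where "j \<ge> Suc k" "x \<in> X j" unfolding B_def by auto
    moreover have "X j \<inter> X k = {}" using X(2) \<open>j \<ge> Suc k\<close> unfolding disjoint_family_on_def by simp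
    ultimately show False using k by blast
  qed
  ultimately have lim: "(\<lambda>n. V (B n)) \<longlonglongrightarrow> 0"
    using contV Bs unfolding continuous_capacity_def by auto
  have "V (B n) \<ge> 1" for n
  proof -
    have "V (X n) \<le> V (B n)" using V_mono[OF Inv_sets[OF X(1)] Bs] unfolding B_def by auto
    then show ?thesis using X(3) by simp
  qed
  then have "1 \<le> (0::real)" using lim by (intro LIMSEQ_le_const) auto
  then show False by simp
qed

end

context erg_setting begin

lemma atom_exists_gen:
  assumes PV: "\<And>S. Pr S \<Longrightarrow> S \<in> Inv \<and> V S = 1"
    and split: "\<And>S. Pr S \<Longrightarrow> \<not> atom S \<Longrightarrow> \<exists>S'. Pr S' \<and> S' \<subseteq> S \<and> V (S - S') = 1"
    and A: "Pr A"
  shows "\<exists>C. atom C \<and> C \<subseteq> A \<and> Pr C"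
proof (rule ccontr)
  assume nC: "\<not> (\<exists>C. atom C \<and> C \<subseteq> A \<and> Pr C)"
  define nxt where "nxt S = (SOME S'. Pr S' \<and> S' \<subseteq> S \<and> V (S - S') = 1)" for S
  define Y where "Y n = (nxt ^^ n) A" for n
  have Y: "Pr (Y n) \<and> Y n \<subseteq> A" for n
  proof (induction n)
    case 0 then show ?case using A by (simp add: Y_def)
  next
    case (Suc n)
    then have "\<not> atom (Y n)" using nC by blast
    then have "\<exists>S'. Pr S' \<and> S' \<subseteq> Y n \<and> V (Y n - S') = 1" using split Suc by blast
    then have "Pr (nxt (Y n)) \<and> nxt (Y n) \<subseteq> Y n \<and> V (Y n - nxt (Y n)) = 1"
      unfolding nxt_def by (rule someI_ex)
    then show ?case using Suc by (auto simp: Y_def)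
  qed
  have Ystep: "Y (Suc n) \<subseteq> Y n \<and> V (Y n - Y (Suc n)) = 1" for n
  proof -
    have "\<not> atom (Y n)" using nC Y by blast
    then have "\<exists>S'. Pr S' \<and> S' \<subseteq> Y n \<and> V (Y n - S') = 1" using split Y by blast
    then have "Pr (nxt (Y n)) \<and> nxt (Y n) \<subseteq> Y n \<and> V (Y n - nxt (Y n)) = 1"
      unfolding nxt_def by (rule someI_ex)
    then show ?thesis by (auto simp: Y_def)
  qed
  have dec: "decseq Y" using Ystep by (intro decseq_SucI) auto
  define X where "X n = Y n - Y (Suc n)" for n
  show False
  proof (rule no_inf_disjoint[of X])
    show "X n \<in> Inv" for n using Y PV Inv_diff unfolding X_def by blast
    show "V (X n) = 1" for n using Ystep unfolding X_def by blast
    show "disjoint_family X"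
      unfolding disjoint_family_on_def
    proof (intro ballI impI)
      fix m n :: nat assume "m \<noteq> n"
      then consider "m < n" | "n < m" by linarith
      then show "X m \<inter> X n = {}"
      proof cases
        case 1
        then have "Y n \<subseteq> Y (Suc m)" using dec by (simp add: decseq_def)
        then show ?thesis unfolding X_def by blast
      next
        case 2
        then have "Y m \<subseteq> Y (Suc n)" using dec by (simp add: decseq_def)
        then show ?thesis unfolding X_def by blast
      qed
    qed
  qed
qed

lemma V_Inv_pos: "A \<in> Inv \<Longrightarrow> V A \<noteq> 0 \<Longrightarrow> V A = 1"
  using Inv_erg by blast

lemma atom_exists:
  assumes "A \<in> Inv" "V A = 1"
  shows "\<exists>C. atom C \<and> C \<subseteq> A"
proof -
  have "\<exists>C. atom C \<and> C \<subseteq> A \<and> (C \<in> Inv \<and> V C = 1)"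
  proof (rule atom_exists_gen[where Pr = "\<lambda>S. S \<in> Inv \<and> V S = 1"])
    fix S assume S: "S \<in> Inv \<and> V S = 1" "\<not> atom S"
    then obtain S' where S': "S' \<in> Inv" "S' \<subseteq> S" "V S' \<noteq> 0" "V (S - S') \<noteq> 0"
      unfolding atom_def by auto
    then show "\<exists>S'. (S' \<in> Inv \<and> V S' = 1) \<and> S' \<subseteq> S \<and> V (S - S') = 1"
      using V_Inv_pos Inv_diff S by blast
  qed (use assms in auto)
  then show ?thesis by blast
qed

lemma atom_sub:
  assumes C: "atom C" and D: "D \<in> Inv" "D \<subseteq> C" "V D = 1"
  shows "atom D"
  unfolding atom_def
proof (intro conjI ballI impI)
  fix S assume S: "S \<in> Inv" "S \<subseteq> D"
  then have "V S = 0 \<or> V (C - S) = 0" using C D unfolding atom_def by auto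
  moreover have "V (D - S) \<le> V (C - S)"
    using D S C by (intro V_mono Inv_sets Inv_diff) (auto simp: atom_def)
  moreover have "0 \<le> V (D - S)" using D S by (intro V_nonneg Inv_sets Inv_diff)
  ultimately show "V S = 0 \<or> V (D - S) = 0" by linarith
qed (use D in auto)

lemma atom_Inv: "atom C \<Longrightarrow> C \<in> Inv" unfolding atom_def by auto
lemma atom_V: "atom C \<Longrightarrow> V C = 1" unfolding atom_def by auto

lemma atom_values:
  assumes C: "atom C" and mu: "prob_space mu" "sets mu = sets M"
    and null: "\<And>S. S \<in> sets M \<Longrightarrow> V S = 0 \<Longrightarrow> measure mu S = 0"
    and full: "measure mu C = 1" and S: "S \<in> Inv"
  shows "measure mu S = (if V (S \<inter> C) = 0 then 0 else 1)"
proof -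
  interpret prob_space mu by fact
  have Cs: "C \<in> sets M" "S \<in> sets M" using C S atom_Inv Inv_sets by auto
  have SC: "S \<inter> C \<in> Inv" using S C atom_Inv Inv_Int by blast
  have "measure mu (S - C) \<le> measure mu (space M - C)"
    using Cs mu(2) sets.sets_into_space[OF Cs(2)] by (intro finite_measure_mono) auto
  also have "\<dots> = 0" using Cs mu full prob_compl[of C] sets_eq_imp_space_eq[OF mu(2)] by simp
  finally have SmC: "measure mu (S - C) = 0" using measure_nonneg[of mu] by (meson order_antisym)
  have eq: "measure mu S = measure mu (S \<inter> C)"
    using Cs mu(2) SmC finite_measure_Diff'[of S C] by (simp add: Diff_Int)
  show ?thesis
  proof (cases "V (S \<inter> C) = 0")
    case True
    then show ?thesis using null[of "S \<inter> C"] eq Cs by auto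
  next
    case False
    then have "V (C - (S \<inter> C)) = 0" using C SC unfolding atom_def by auto
    then have "measure mu (C - (S \<inter> C)) = 0" using null Cs by auto
    then have "measure mu (S \<inter> C) = 1"
      using full Cs mu(2) finite_measure_Diff[of C "S \<inter> C"] by auto
    then show ?thesis using eq False by simp
  qed
qed

end

lemma mix_measure:
  assumes mu: "prob_space mu" "sets mu = sets M" and nu: "prob_space nu" "sets nu = sets M"
  shows "\<exists>M0. finite_measure M0 \<and> sets M0 = sets M \<and> space M0 = space M \<and>
     (\<forall>B\<in>sets M. emeasure M0 B = emeasure mu B + emeasure nu B)"
proof -
  define f where "f B = emeasure mu B + emeasure nu B" for B
  define M0 where "M0 = measure_of (space M) (sets M) f"
  have sa: "sigma_algebra (space M) (sets M)" by (rule sets.sigma_algebra_axioms)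
  have pos: "positive (sets M) f" unfolding positive_def f_def by simp
  have ca: "countably_additive (sets M) f"
    unfolding countably_additive_def
  proof (intro allI impI)
    fix A :: "nat \<Rightarrow> _" assume A: "range A \<subseteq> sets M" "disjoint_family A"
    have "(\<Sum>i. f (A i)) = (\<Sum>i. emeasure mu (A i)) + (\<Sum>i. emeasure nu (A i))"
      unfolding f_def by (rule suminf_add[symmetric]) (auto intro: summableI)
    also have "\<dots> = f (\<Union>i. A i)"
      unfolding f_def using A mu nu by (simp add: suminf_emeasure)
    finally show "(\<Sum>i. f (A i)) = f (\<Union>i. A i)" .
  qed
  have sM0: "sets M0 = sets M" unfolding M0_def by (simp add: sets.space_closed)
  have spM0: "space M0 = space M" unfolding M0_def by (simp add: sets.space_closed)
  have em: "\<forall>B\<in>sets M. emeasure M0 B = f B"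
    unfolding M0_def using emeasure_measure_of_sigma[OF sa pos ca] by auto
  have "emeasure M0 (space M0) \<noteq> \<infinity>"
  proof -
    have "emeasure M0 (space M0) = f (space M)" using em spM0 by simp
    also have "\<dots> = 1 + 1" unfolding f_def using mu nu
      by (metis prob_space.emeasure_space_1 sets_eq_imp_space_eq)
    finally show ?thesis by simp
  qed
  then have "finite_measure M0" by (rule finite_measureI)
  then show ?thesis using sM0 spM0 em unfolding f_def by blast
qed

lemma (in finite_measure) diff_tri:
  assumes "a \<in> sets M" "b \<in> sets M" "c \<in> sets M"
  shows "measure M (a - c) \<le> measure M (a - b) + measure M (b - c)"
proof -
  have ab: "a - b \<in> sets M" and bc: "b - c \<in> sets M" using assms by auto
  have "measure M (a - c) \<le> measure M ((a - b) \<union> (b - c))"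
    using ab bc by (intro finite_measure_mono) auto
  also have "\<dots> \<le> measure M (a - b) + measure M (b - c)"
    using ab bc by (intro measure_subadditive) (auto simp: emeasure_finite)
  finally show ?thesis .
qed

context erg_setting begin

lemma Gn_diff: "(G ^^ n) (A - B) = (G ^^ n) A - (G ^^ n) B"
  by (induction n) (auto simp: G_diff)

lemma measure_Gn:
  assumes N: "finite_measure N" "sets N = sets M"
    and inv: "\<And>B. B \<in> sets M \<Longrightarrow> measure N (G B) = measure N B"
    and B: "B \<in> sets M"
  shows "measure N ((G ^^ n) B) = measure N B"
  by (induction n) (auto simp: inv Gn_sets B)

lemma ae_inv:
  assumes N: "finite_measure N" "sets N = sets M"
    and inv: "\<And>B. B \<in> sets M \<Longrightarrow> measure N (G B) = measure N B"
    and E: "E \<in> sets M" and d1: "measure N (E - G E) = 0" and d2: "measure N (G E - E) = 0"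
  shows "\<exists>E'\<in>Inv. measure N (E - E') = 0 \<and> measure N (E' - E) = 0"
proof -
  interpret finite_measure N by fact
  have GnE: "(G ^^ n) E \<in> sets M" for n using Gn_sets[OF E] .
  have step: "measure N ((G ^^ n) E - (G ^^ Suc n) E) = 0 \<and> measure N ((G ^^ Suc n) E - (G ^^ n) E) = 0" for n
  proof -
    have "(G ^^ Suc n) E = (G ^^ n) (G E)" by (metis comp_apply funpow_Suc_right)
    then have "(G ^^ n) E - (G ^^ Suc n) E = (G ^^ n) (E - G E)"
      "(G ^^ Suc n) E - (G ^^ n) E = (G ^^ n) (G E - E)" by (simp_all add: Gn_diff)
    then show ?thesis
      using measure_Gn[OF N inv] d1 d2 E G_sets by (simp add: sets.Diff)
  qed
  have null: "measure N (E - (G ^^ n) E) = 0 \<and> measure N ((G ^^ n) E - E) = 0" for n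
  proof (induction n)
    case 0 then show ?case by simp
  next
    case (Suc n)
    have a: "measure N (E - (G ^^ Suc n) E) = 0"
      using diff_tri[of E "(G ^^ n) E" "(G ^^ Suc n) E"] GnE[of n] GnE[of "Suc n"] E N(2)
        Suc step[of n] by (simp add: order_antisym)
    have b: "measure N ((G ^^ Suc n) E - E) = 0"
      using diff_tri[of "(G ^^ Suc n) E" "(G ^^ n) E" E] GnE[of n] GnE[of "Suc n"] E N(2)
        Suc step[of n] by (simp add: order_antisym)
    show ?case using a b by simp
  qed
  define U where "U k = (\<Union>n\<in>{k..}. (G ^^ n) E)" for k
  define E' where "E' = (\<Inter>k. U k)"
  have Us: "U k \<in> sets M" for k unfolding U_def using GnE by auto
  have E's: "E' \<in> sets M" unfolding E'_def using Us by auto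
  have Udec: "U (Suc k) \<subseteq> U k" for k unfolding U_def by (intro UN_mono) auto
  have GU: "G (U k) = U (Suc k)" for k
  proof -
    have "G (U k) = (\<Union>n\<in>{k..}. G ((G ^^ n) E))" unfolding U_def G_def by auto
    also have "\<dots> = (\<Union>n\<in>{k..}. (G ^^ Suc n) E)" by simp
    also have "\<dots> = U (Suc k)"
    proof
      show "(\<Union>n\<in>{k..}. (G ^^ Suc n) E) \<subseteq> U (Suc k)"
      proof
        fix x assume "x \<in> (\<Union>n\<in>{k..}. (G ^^ Suc n) E)"
        then obtain n where n: "n \<ge> k" "x \<in> (G ^^ Suc n) E" by auto
        then have "Suc n \<in> {Suc k..}" by simp
        then show "x \<in> U (Suc k)" unfolding U_def using n(2) by (rule UN_I)
      qed
      show "U (Suc k) \<subseteq> (\<Union>n\<in>{k..}. (G ^^ Suc n) E)"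
      proof
        fix x assume "x \<in> U (Suc k)"
        then obtain m where m: "m \<ge> Suc k" "x \<in> (G ^^ m) E" unfolding U_def by auto
        then have "m = Suc (m - 1)" "m - 1 \<in> {k..}" by auto
        then show "x \<in> (\<Union>n\<in>{k..}. (G ^^ Suc n) E)" using m(2) by (metis UN_I)
      qed
    qed
    finally show ?thesis .
  qed
  have GE': "G E' = E'"
  proof -
    have "G E' = (\<Inter>k. G (U k))" unfolding E'_def G_def by auto
    also have "\<dots> = (\<Inter>k. U (Suc k))" using GU by simp
    also have "\<dots> = E'" unfolding E'_def
    proof
      show "(\<Inter>k. U (Suc k)) \<subseteq> (\<Inter>k. U k)"
      proof
        fix x assume "x \<in> (\<Inter>k. U (Suc k))"
        then have "x \<in> U (Suc k)" for k by blast
        then have "x \<in> U k" for k using Udec by blast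
        then show "x \<in> (\<Inter>k. U k)" by blast
      qed
    qed blast
    finally show ?thesis .
  qed
  have E'I: "E' \<in> Inv" using E's GE' by (simp add: Inv_iff)
  have nn1: "E - (G ^^ n) E \<in> null_sets N" for n
    using null[of n] GnE E N(2) by (simp add: emeasure_eq_measure null_sets_def sets.Diff)
  have nn2: "(G ^^ n) E - E \<in> null_sets N" for n
    using null[of n] GnE E N(2) by (simp add: emeasure_eq_measure null_sets_def sets.Diff)
  have "E - E' \<subseteq> (\<Union>n. E - (G ^^ n) E)"
  proof
    fix x assume "x \<in> E - E'"
    then obtain k where "x \<in> E" "x \<notin> U k" unfolding E'_def by auto
    then have "x \<in> E - (G ^^ k) E" unfolding U_def by auto
    then show "x \<in> (\<Union>n. E - (G ^^ n) E)" by blast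
  qed
  moreover have "(\<Union>n. E - (G ^^ n) E) \<in> null_sets N" by (rule null_sets_UN, rule nn1)
  ultimately have z1: "E - E' \<in> null_sets N" using E E's N(2) by (metis null_sets_subset sets.Diff)
  have "E' - E \<subseteq> (\<Union>n. (G ^^ n) E - E)"
  proof
    fix x assume "x \<in> E' - E"
    then obtain n where "x \<in> (G ^^ n) E" "x \<notin> E" unfolding E'_def U_def by auto
    then show "x \<in> (\<Union>n. (G ^^ n) E - E)" by blast
  qed
  moreover have "(\<Union>n. (G ^^ n) E - E) \<in> null_sets N" by (rule null_sets_UN, rule nn2)
  ultimately have z2: "E' - E \<in> null_sets N" using E E's N(2) by (metis null_sets_subset sets.Diff)
  show ?thesis using E'I z1 z2 by (intro bexI[of _ E']) (auto simp: measure_def null_sets_def)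
qed

end

lemma ennreal_add_pos_less:
  fixes a p b :: ennreal
  assumes "a + p = b" "p \<noteq> 0" "a \<noteq> top"
  shows "a < b"
proof -
  have "a \<le> b" using assms(1) by (metis add_increasing2 order_refl zero_le)
  moreover have "a \<noteq> b"
  proof
    assume "a = b"
    then have "a + p = a + 0" using assms(1) by simp
    then have "p = 0" using assms(3) by (simp add: ennreal_add_left_cancel)
    then show False using assms(2) by simp
  qed
  ultimately show ?thesis by simp
qed

context erg_setting begin

lemma half_bound:
  assumes mu: "prob_space mu" "sets mu = sets M" and nu: "prob_space nu" "sets nu = sets M"
    and imu: "\<And>B. B \<in> sets M \<Longrightarrow> measure mu (G B) = measure mu B"
    and inu: "\<And>B. B \<in> sets M \<Longrightarrow> measure nu (G B) = measure nu B"
    and agree: "\<And>A. A \<in> Inv \<Longrightarrow> measure mu A = measure nu A"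
    and M0: "finite_measure M0" "sets M0 = sets M" "space M0 = space M"
      "\<forall>B\<in>sets M. emeasure M0 B = emeasure mu B + emeasure nu B"
    and B: "B \<in> sets M"
  shows "measure M0 B \<le> 2 * measure mu B"
proof -
  interpret M0: finite_measure M0 by fact
  interpret mu: prob_space mu by fact
  interpret nu: prob_space nu by fact
  have m0: "measure M0 S = measure mu S + measure nu S" if S: "S \<in> sets M" for S
  proof -
    have "emeasure M0 S = ennreal (measure mu S + measure nu S)"
      using M0(4) S by (simp add: mu.emeasure_eq_measure nu.emeasure_eq_measure)
    then have "measure M0 S = enn2real (ennreal (measure mu S + measure nu S))"
      by (simp only: Sigma_Algebra.measure_def[of M0])
    then show ?thesis by (metis enn2real_ennreal add_nonneg_nonneg measure_nonneg)
  qed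
  have emu: "emeasure mu S = ennreal (measure mu S)" for S by (rule mu.emeasure_eq_measure)
  have eM0: "emeasure M0 S = ennreal (measure M0 S)" for S by (rule M0.emeasure_eq_measure)
  have mu_le: "measure mu S \<le> measure M0 S" if "S \<in> sets M" for S
    using m0[OF that] measure_nonneg[of nu S] by linarith
  have inv0: "measure M0 (G S) = measure M0 S" if "S \<in> sets M" for S
    using m0 that G_sets imu inu by simp
  have ac: "absolutely_continuous M0 mu"
    unfolding absolutely_continuous_def
  proof
    fix N assume "N \<in> null_sets M0"
    then have "N \<in> sets M" "emeasure M0 N = 0" using M0(2) by auto
    then show "N \<in> null_sets mu" using M0(4) mu(2) by auto
  qed
  define f where "f = RN_deriv M0 mu"
  have dens: "density M0 f = mu" unfolding f_def
    by (rule M0.density_RN_deriv[OF ac]) (simp add: mu(2) M0(2))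
  have fm[measurable]: "f \<in> borel_measurable M0" unfolding f_def by simp
  have emuf: "emeasure mu S = (\<integral>\<^sup>+x. f x * indicator S x \<partial>M0)" if "S \<in> sets M" for S
    using emeasure_density[OF fm, of S] dens that M0(2) by simp
  define E where "E = {x \<in> space M0. f x < ennreal (1/2)}"
  have Es0: "E \<in> sets M0" unfolding E_def by measurable
  then have Es: "E \<in> sets M" using M0(2) by simp
  have E_sub: "E \<subseteq> space M" using M0(3) unfolding E_def by auto
  have claimA: "2 * measure mu S < measure M0 S"
    if S: "S \<in> sets M" "S \<subseteq> E" "measure M0 S > 0" for S
  proof -
    have S0[measurable]: "S \<in> sets M0" using S M0(2) by simp
    have "(\<integral>\<^sup>+x. f x * indicator S x \<partial>M0) + (\<integral>\<^sup>+x. (ennreal (1/2) - f x) * indicator S x \<partial>M0)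
        = (\<integral>\<^sup>+x. f x * indicator S x + (ennreal (1/2) - f x) * indicator S x \<partial>M0)"
      using S0 by (intro nn_integral_add[symmetric]) measurable
    also have "\<dots> = (\<integral>\<^sup>+x. ennreal (1/2) * indicator S x \<partial>M0)"
    proof (rule nn_integral_cong)
      fix x assume "x \<in> space M0"
      show "f x * indicator S x + (ennreal (1/2) - f x) * indicator S x = ennreal (1/2) * indicator S x"
      proof (cases "x \<in> S")
        case True
        then have "f x < ennreal (1/2)" using S(2) unfolding E_def by auto
        then show ?thesis using True by (simp add: add_diff_inverse_ennreal less_imp_le)
      qed simp
    qed
    also have "\<dots> = ennreal (1/2) * emeasure M0 S" using S0 by (rule nn_integral_cmult_indicator)
    finally have eq: "emeasure mu S + (\<integral>\<^sup>+x. (ennreal (1/2) - f x) * indicator S x \<partial>M0)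
        = ennreal (1/2) * emeasure M0 S" using emuf[OF S(1)] by simp
    have pos: "(\<integral>\<^sup>+x. (ennreal (1/2) - f x) * indicator S x \<partial>M0) \<noteq> 0"
    proof
      assume "(\<integral>\<^sup>+x. (ennreal (1/2) - f x) * indicator S x \<partial>M0) = 0"
      then have "AE x in M0. (ennreal (1/2) - f x) * indicator S x = 0"
        using S0 by (subst nn_integral_0_iff_AE[symmetric]) measurable
      then have "AE x in M0. x \<notin> S"
      proof (rule eventually_mono)
        fix x assume x: "(ennreal (1/2) - f x) * indicator S x = 0"
        show "x \<notin> S"
        proof
          assume xS: "x \<in> S"
          then have "f x < ennreal (1/2)" using S(2) unfolding E_def by auto
          moreover have "ennreal (1/2) - f x = 0" using x xS by simp
          ultimately show False by (auto simp: diff_eq_0_iff_ennreal not_le[symmetric])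
        qed
      qed
      then have "S \<in> null_sets M0" using S0 by (simp add: AE_iff_null_sets)
      then have "measure M0 S = 0" by (simp add: measure_def null_sets_def)
      then show False using S(3) by simp
    qed
    have hm: "ennreal (1/2) * emeasure M0 S = ennreal (1/2 * measure M0 S)"
      unfolding eM0 by (rule ennreal_mult[symmetric]) auto
    have "emeasure mu S < ennreal (1/2) * emeasure M0 S"
      using ennreal_add_pos_less[OF eq pos] emu by simp
    then have "ennreal (measure mu S) < ennreal (1/2 * measure M0 S)"
      using hm emu by metis
    then have "measure mu S < 1/2 * measure M0 S"
      by (subst ennreal_less_iff[symmetric]) auto
    then show ?thesis by simp
  qed
  have claimB: "measure M0 S \<le> 2 * measure mu S" if S: "S \<in> sets M" "S \<inter> E = {}" for S
  proof -
    have S0[measurable]: "S \<in> sets M0" using S M0(2) by simp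
    have "ennreal (1/2) * emeasure M0 S = (\<integral>\<^sup>+x. ennreal (1/2) * indicator S x \<partial>M0)"
      using S0 by (rule nn_integral_cmult_indicator[symmetric])
    also have "\<dots> \<le> (\<integral>\<^sup>+x. f x * indicator S x \<partial>M0)"
    proof (rule nn_integral_mono)
      fix x assume x: "x \<in> space M0"
      show "ennreal (1/2) * indicator S x \<le> f x * indicator S x"
      proof (cases "x \<in> S")
        case True
        then have "\<not> f x < ennreal (1/2)" using S(2) x unfolding E_def by auto
        then show ?thesis using True by simp
      qed simp
    qed
    also have "\<dots> = emeasure mu S" using emuf[OF S(1)] by simp
    finally have ineq: "ennreal (1/2) * emeasure M0 S \<le> emeasure mu S" .
    have hm: "ennreal (1/2) * emeasure M0 S = ennreal (1/2 * measure M0 S)"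
      unfolding eM0 by (rule ennreal_mult[symmetric]) auto
    have "ennreal (1/2 * measure M0 S) \<le> ennreal (measure mu S)"
      using ineq hm emu by metis
    then have "1/2 * measure M0 S \<le> measure mu S" by (subst ennreal_le_iff[symmetric]) auto
    then show ?thesis by simp
  qed
  define a where "a = E - G E"
  define b where "b = G E - E"
  have GEs: "G E \<in> sets M" using Es G_sets by simp
  have as: "a \<in> sets M" and bs: "b \<in> sets M" unfolding a_def b_def using Es GEs by auto
  have mu_ab: "measure mu a = measure mu b"
  proof -
    have "measure mu a = measure mu E - measure mu (E \<inter> G E)"
      unfolding a_def using Es GEs mu(2) by (intro mu.finite_measure_Diff') auto
    moreover have "measure mu b = measure mu (G E) - measure mu (G E \<inter> E)"
      unfolding b_def using Es GEs mu(2) by (intro mu.finite_measure_Diff') auto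
    ultimately show ?thesis using imu[OF Es] by (simp add: Int_commute)
  qed
  have M0_ab: "measure M0 a = measure M0 b"
  proof -
    have "measure M0 a = measure M0 E - measure M0 (E \<inter> G E)"
      unfolding a_def using Es GEs M0(2) by (intro M0.finite_measure_Diff') auto
    moreover have "measure M0 b = measure M0 (G E) - measure M0 (G E \<inter> E)"
      unfolding b_def using Es GEs M0(2) by (intro M0.finite_measure_Diff') auto
    ultimately show ?thesis using inv0[OF Es] by (simp add: Int_commute)
  qed
  have a0: "measure M0 a = 0"
  proof (rule ccontr)
    assume "measure M0 a \<noteq> 0"
    then have "measure M0 a > 0" using measure_nonneg[of M0 a] by linarith
    then have "2 * measure mu a < measure M0 a" using claimA[OF as] unfolding a_def by auto
    moreover have "measure M0 b \<le> 2 * measure mu b" using claimB[OF bs] unfolding b_def by auto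
    ultimately show False using mu_ab M0_ab by linarith
  qed
  have b0: "measure M0 b = 0" using a0 M0_ab by simp
  obtain E' where E': "E' \<in> Inv" "measure M0 (E - E') = 0" "measure M0 (E' - E) = 0"
    using ae_inv[OF M0(1,2) inv0 Es] a0 b0 unfolding a_def b_def by blast
  have E's: "E' \<in> sets M" using E' Inv_sets by simp
  have same: "measure P E = measure P E'"
    if P: "finite_measure P" "sets P = sets M" "\<And>S. S \<in> sets M \<Longrightarrow> measure P S \<le> measure M0 S" for P
  proof -
    interpret P: finite_measure P by fact
    have z1: "measure P (E - E') = 0"
      using P(3)[of "E - E'"] E'(2) Es E's measure_nonneg[of P "E - E'"] by auto
    have z2: "measure P (E' - E) = 0"
      using P(3)[of "E' - E"] E'(3) Es E's measure_nonneg[of P "E' - E"] by auto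
    have "measure P (E - E') = measure P E - measure P (E \<inter> E')"
      using Es E's P(2) by (intro P.finite_measure_Diff') auto
    moreover have "measure P (E' - E) = measure P E' - measure P (E' \<inter> E)"
      using Es E's P(2) by (intro P.finite_measure_Diff') auto
    ultimately show ?thesis using z1 z2 by (simp add: Int_commute)
  qed
  have nu_le: "measure nu S \<le> measure M0 S" if "S \<in> sets M" for S
    using m0[OF that] measure_nonneg[of mu S] by linarith
  have "measure mu E = measure nu E"
    using same[of mu] same[of nu] mu_le nu_le mu(2) nu(2) agree[OF E'(1)]
      mu.finite_measure_axioms nu.finite_measure_axioms by simp
  have E0: "measure M0 E = 0"
  proof (rule ccontr)
    assume "measure M0 E \<noteq> 0"
    then have "measure M0 E > 0" using measure_nonneg[of M0 E] by linarith
    then have "2 * measure mu E < measure M0 E" using claimA[OF Es] by auto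
    then show False using m0[OF Es] \<open>measure mu E = measure nu E\<close> by simp
  qed
  have "measure M0 B = measure M0 (B - E)"
  proof -
    have "measure M0 (B - E) = measure M0 B - measure M0 (B \<inter> E)"
      using B Es M0(2) by (intro M0.finite_measure_Diff') auto
    moreover have "measure M0 (B \<inter> E) \<le> measure M0 E"
      using B Es M0(2) by (intro M0.finite_measure_mono) auto
    ultimately show ?thesis using E0 measure_nonneg[of M0 "B \<inter> E"] by simp
  qed
  also have "\<dots> \<le> 2 * measure mu (B - E)" using claimB[of "B - E"] B Es by auto
  also have "\<dots> \<le> 2 * measure mu B"
    using B Es mu(2) mu.finite_measure_mono[of "B - E" B] by auto
  finally show ?thesis .
qed

lemma unique_inv:
  assumes mu: "prob_space mu" "sets mu = sets M" and nu: "prob_space nu" "sets nu = sets M"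
    and imu: "\<And>B. B \<in> sets M \<Longrightarrow> measure mu (G B) = measure mu B"
    and inu: "\<And>B. B \<in> sets M \<Longrightarrow> measure nu (G B) = measure nu B"
    and agree: "\<And>A. A \<in> Inv \<Longrightarrow> measure mu A = measure nu A"
    and B: "B \<in> sets M"
  shows "measure mu B = measure nu B"
proof -
  obtain M0 where M0: "finite_measure M0" "sets M0 = sets M" "space M0 = space M"
      "\<forall>B\<in>sets M. emeasure M0 B = emeasure mu B + emeasure nu B"
    using mix_measure[OF mu nu] by blast
  have M0': "\<forall>B\<in>sets M. emeasure M0 B = emeasure nu B + emeasure mu B"
    using M0(4) by (simp add: add.commute)
  have 1: "measure M0 B \<le> 2 * measure mu B"
    by (rule half_bound[OF mu nu imu inu agree M0 B])
  have agree': "\<And>A. A \<in> Inv \<Longrightarrow> measure nu A = measure mu A" using agree by simp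
  have 2: "measure M0 B \<le> 2 * measure nu B"
    using half_bound[OF nu mu inu imu agree' M0(1-3) M0' B] .
  interpret mu: prob_space mu by fact
  interpret nu: prob_space nu by fact
  have "measure M0 B = measure mu B + measure nu B"
  proof -
    have "emeasure M0 B = ennreal (measure mu B + measure nu B)"
      using M0(4) B by (simp add: mu.emeasure_eq_measure nu.emeasure_eq_measure)
    then have "measure M0 B = enn2real (ennreal (measure mu B + measure nu B))"
      by (simp only: Sigma_Algebra.measure_def[of M0])
    then show ?thesis by (metis enn2real_ennreal add_nonneg_nonneg measure_nonneg)
  qed
  then show ?thesis using 1 2 by linarith
qed

end

lemma eq_by_eps:
  fixes x y :: real
  assumes "\<And>e. e > 0 \<Longrightarrow> \<bar>x - y\<bar> \<le> e"
  shows "x = y"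
proof (rule ccontr)
  assume "x \<noteq> y"
  then have "\<bar>x - y\<bar> > 0" by simp
  from assms[of "\<bar>x - y\<bar> / 2"] this show False by simp
qed

lemma abs3:
  fixes a b c x y z d :: real
  assumes "\<bar>a - x\<bar> < d" "\<bar>b - y\<bar> < d" "\<bar>c - z\<bar> < d" "c = a + b"
  shows "\<bar>z - (x + y)\<bar> \<le> 3 * d"
  using assms by (simp add: abs_less_iff abs_le_iff)

lemma abs3':
  fixes a b x y t d :: real
  assumes "\<bar>a - b\<bar> \<le> t" "\<bar>b - y\<bar> < d" "\<bar>a - x\<bar> < d" "t < d"
  shows "\<bar>x - y\<bar> \<le> 3 * d"
  using assms by (simp add: abs_less_iff abs_le_iff)

lemma cluster_point:
  fixes s :: "nat \<Rightarrow> 'b \<Rightarrow> real"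
  assumes range: "\<And>n x. s n x \<in> {0..1}"
  shows "\<exists>R. (\<forall>x. R x \<in> {0..1}) \<and>
     (\<forall>I e N. finite I \<longrightarrow> e > 0 \<longrightarrow> (\<exists>n\<ge>N. \<forall>i\<in>I. \<bar>s n i - R i\<bar> < e))"
proof -
  define K where "K = (Pi\<^sub>E UNIV (\<lambda>_::'b. {0..1::real}))"
  have "compactin (product_topology (\<lambda>_. euclidean) UNIV) K"
    unfolding K_def by (subst compactin_PiE) auto
  then have cK: "compact K" by (simp add: euclidean_product_topology)
  define F where "F = filtermap s sequentially"
  have Fnb: "F \<noteq> bot" unfolding F_def by (simp add: filtermap_bot_iff)
  have FK: "eventually (\<lambda>g. g \<in> K) F"
    unfolding F_def K_def using range by (simp add: eventually_filtermap PiE_UNIV_domain)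
  obtain R where R: "R \<in> K" "inf (nhds R) F \<noteq> bot"
    using cK Fnb FK unfolding compact_filter by blast
  have cl: "\<exists>n\<ge>N. s n \<in> U" if U: "open U" "R \<in> U" for U N
  proof (rule ccontr)
    assume "\<not> (\<exists>n\<ge>N. s n \<in> U)"
    then have "eventually (\<lambda>n. s n \<notin> U) sequentially"
      by (auto simp: eventually_sequentially)
    then have e1: "eventually (\<lambda>g. g \<notin> U) F" unfolding F_def by (simp add: eventually_filtermap)
    have e2: "eventually (\<lambda>g. g \<in> U) (nhds R)" using U by (rule eventually_nhds_in_open)
    have "eventually (\<lambda>g. False) (inf (nhds R) F)"
      unfolding eventually_inf using e1 e2 by blast
    then show False using R(2) by (simp add: eventually_False)
  qed
  have "\<exists>n\<ge>N. \<forall>i\<in>I. \<bar>s n i - R i\<bar> < e" if "finite I" "e > 0" for I e N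
  proof -
    have "open {f. \<forall>i\<in>I. f (id i) \<in> ball (R i) e}"
      using that by (intro product_topology_basis') auto
    moreover have "R \<in> {f. \<forall>i\<in>I. f (id i) \<in> ball (R i) e}" using that by simp
    ultimately obtain n where "n \<ge> N" "s n \<in> {f. \<forall>i\<in>I. f (id i) \<in> ball (R i) e}"
      using cl by blast
    then show ?thesis by (auto simp: dist_real_def abs_minus_commute)
  qed
  moreover have "\<forall>x. R x \<in> {0..1}" using R(1) unfolding K_def by auto
  ultimately show ?thesis by blast
qed

context erg_setting begin

lemma inv_measure_exists:
  assumes Q: "Q \<in> core M V"
  shows "\<exists>R\<in>core M V. invariant_prob M T R \<and> (\<forall>A\<in>Inv. measure R A = measure Q A)"
proof -
  interpret Q: prob_space Q using core_D(1)[OF Q] .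
  have sQ: "sets Q = sets M" using core_D(2)[OF Q] .
  define s where "s n B = (\<Sum>k<Suc n. measure Q ((G ^^ k) B)) / real (Suc n)" for n B
  have s_range: "s n B \<in> {0..1}" for n B
  proof -
    have "(\<Sum>k<Suc n. measure Q ((G ^^ k) B)) \<le> (\<Sum>k<Suc n. 1)"
      by (intro sum_mono) simp
    moreover have "0 \<le> (\<Sum>k<Suc n. measure Q ((G ^^ k) B))" by (intro sum_nonneg) simp
    ultimately show ?thesis unfolding s_def by (auto simp: divide_le_eq)
  qed
  have s_le_V: "s n B \<le> V B" if B: "B \<in> sets M" for n B
  proof -
    have "(\<Sum>k<Suc n. measure Q ((G ^^ k) B)) \<le> (\<Sum>k<Suc n. V B)"
    proof (intro sum_mono)
      fix k
      have "measure Q ((G ^^ k) B) \<le> V ((G ^^ k) B)" using core_D(4)[OF Q] Gn_sets[OF B] by simp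
      then show "measure Q ((G ^^ k) B) \<le> V B" using V_Gn[OF B] by simp
    qed
    then show ?thesis unfolding s_def by (simp add: divide_le_eq mult.commute)
  qed
  have Gn_Un: "(G ^^ k) (B \<union> C) = (G ^^ k) B \<union> (G ^^ k) C" for k B C
    by (induction k) (auto simp: G_Un)
  have Gn_Int: "(G ^^ k) (B \<inter> C) = (G ^^ k) B \<inter> (G ^^ k) C" for k B C
    by (induction k) (auto simp: G_Int)
  have s_add: "s n (B \<union> C) = s n B + s n C"
    if B: "B \<in> sets M" "C \<in> sets M" "B \<inter> C = {}" for n B C
  proof -
    have "measure Q ((G ^^ k) (B \<union> C)) = measure Q ((G ^^ k) B) + measure Q ((G ^^ k) C)" for k
    proof -
      have "(G ^^ k) {} = {}" for k by (induction k) (auto simp: G_def)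
      then have "(G ^^ k) B \<inter> (G ^^ k) C = {}"
        using Gn_Int[of k B C] B(3) by simp
      then show ?thesis unfolding Gn_Un using Gn_sets B sQ
        by (intro measure_Union) (auto simp: Q.emeasure_eq_measure)
    qed
    then show ?thesis unfolding s_def by (simp add: sum.distrib add_divide_distrib)
  qed
  have Gn_space: "(G ^^ k) (space M) = space M" for k by (induction k) (auto simp: G_space)
  have s_space: "s n (space M) = 1" for n
  proof -
    have "measure Q (space M) = 1" using Q.prob_space sets_eq_imp_space_eq[OF sQ] by simp
    then show ?thesis unfolding s_def Gn_space by simp
  qed
  have Gn_Inv: "A \<in> Inv \<Longrightarrow> (G ^^ k) A = A" for k A by (induction k) (auto simp: Inv_G)
  have s_inv: "s n A = measure Q A" if "A \<in> Inv" for n A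
    unfolding s_def Gn_Inv[OF that] by simp
  have s_shift: "\<bar>s n (G B) - s n B\<bar> \<le> 1 / real (Suc n)" for n B
  proof -
    have "(\<Sum>k<Suc n. measure Q ((G ^^ k) (G B))) - (\<Sum>k<Suc n. measure Q ((G ^^ k) B))
        = (\<Sum>k<Suc n. measure Q ((G ^^ Suc k) B) - measure Q ((G ^^ k) B))"
      by (simp add: sum_subtractf funpow_Suc_right del: funpow.simps)
    also have "\<dots> = measure Q ((G ^^ Suc n) B) - measure Q ((G ^^ 0) B)"
      by (rule sum_lessThan_telescope)
    finally have tel: "(\<Sum>k<Suc n. measure Q ((G ^^ k) (G B))) - (\<Sum>k<Suc n. measure Q ((G ^^ k) B))
        = measure Q ((G ^^ Suc n) B) - measure Q ((G ^^ 0) B)" .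
    have eq: "s n (G B) - s n B = (measure Q ((G ^^ Suc n) B) - measure Q B) / real (Suc n)"
      unfolding s_def diff_divide_distrib[symmetric] by (simp only: tel funpow_0 id_apply)
    have "\<bar>measure Q ((G ^^ Suc n) B) - measure Q B\<bar> \<le> 1"
      using Q.prob_le_1 measure_nonneg by (smt (verit))
    then show ?thesis unfolding eq by (simp add: divide_right_mono)
  qed
  obtain R where R01: "\<And>x. R x \<in> {0..1}"
    and cl: "\<And>I e N. finite I \<Longrightarrow> e > 0 \<Longrightarrow> \<exists>n\<ge>N. \<forall>i\<in>I. \<bar>s n i - R i\<bar> < e"
    using cluster_point[of s, OF s_range] by blast
  have R_le_V: "R B \<le> V B" if B: "B \<in> sets M" for B
  proof (rule ccontr)
    assume "\<not> R B \<le> V B"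
    then obtain n where "\<bar>s n B - R B\<bar> < R B - V B"
      using cl[of "{B}" "R B - V B" 0] by auto
    then show False using s_le_V[OF B, of n] by linarith
  qed
  have R_add: "R (B \<union> C) = R B + R C" if B: "B \<in> sets M" "C \<in> sets M" "B \<inter> C = {}" for B C
  proof (rule eq_by_eps)
    fix e :: real assume e: "e > 0"
    obtain n where "\<forall>i\<in>{B, C, B \<union> C}. \<bar>s n i - R i\<bar> < e / 3"
      using cl[of "{B, C, B \<union> C}" "e / 3" 0] e by auto
    then have "\<bar>s n B - R B\<bar> < e / 3" "\<bar>s n C - R C\<bar> < e / 3" "\<bar>s n (B \<union> C) - R (B \<union> C)\<bar> < e / 3"
      by auto
    from abs3[OF this s_add[OF B, of n]] show "\<bar>R (B \<union> C) - (R B + R C)\<bar> \<le> e" by simp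
  qed
  have R_space: "R (space M) = 1"
  proof (rule eq_by_eps)
    fix e :: real assume e: "e > 0"
    obtain n where "\<bar>s n (space M) - R (space M)\<bar> < e" using cl[of "{space M}" e 0] e by auto
    then show "\<bar>R (space M) - 1\<bar> \<le> e" using s_space[of n] by auto
  qed
  have R_inv: "R A = measure Q A" if A: "A \<in> Inv" for A
  proof (rule eq_by_eps)
    fix e :: real assume e: "e > 0"
    obtain n where "\<bar>s n A - R A\<bar> < e" using cl[of "{A}" e 0] e by auto
    then show "\<bar>R A - measure Q A\<bar> \<le> e" using s_inv[OF A, of n] by auto
  qed
  have R_G: "R (G B) = R B" for B
  proof (rule eq_by_eps)
    fix e :: real assume e: "e > 0"
    obtain N :: nat where N: "1 / real (Suc N) < e / 3"
    proof -
      obtain N :: nat where "real N > 3 / e" using reals_Archimedean2 by blast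
      then have "1 / real (Suc N) < e / 3" using e by (simp add: field_simps)
      then show ?thesis using that by blast
    qed
    obtain n where n: "n \<ge> N" "\<forall>i\<in>{B, G B}. \<bar>s n i - R i\<bar> < e / 3"
      using cl[of "{B, G B}" "e / 3" N] e by auto
    have "1 / real (Suc n) \<le> 1 / real (Suc N)" using n(1) by (simp add: frac_le)
    then have t: "\<bar>s n (G B) - s n B\<bar> \<le> 1 / real (Suc n)" "1 / real (Suc n) < e / 3"
      using s_shift[of n B] N by auto
    have "\<bar>s n B - R B\<bar> < e / 3" "\<bar>s n (G B) - R (G B)\<bar> < e / 3" using n(2) by auto
    from abs3'[OF t(1) this t(2)] show "\<bar>R (G B) - R B\<bar> \<le> e" by simp
  qed
  have R_empty: "R {} = 0" using R_add[of "{}" "{}"] by simp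
  have R_cont: "(\<lambda>i. R (A i)) \<longlonglongrightarrow> 0"
    if A: "range A \<subseteq> sets M" "decseq A" "(\<Inter>i. A i) = {}" for A :: "nat \<Rightarrow> 'a set"
  proof (rule tendsto_sandwich[of "\<lambda>_. 0" _ _ "\<lambda>i. V (A i)"])
    show "\<forall>\<^sub>F n in sequentially. 0 \<le> R (A n)" using R01 by simp
    show "\<forall>\<^sub>F n in sequentially. R (A n) \<le> V (A n)" using R_le_V A(1) by auto
    show "(\<lambda>i. V (A i)) \<longlonglongrightarrow> 0" using contV A unfolding continuous_capacity_def by auto
  qed simp
  define f where "f B = ennreal (R B)" for B
  have pos: "positive (sets M) f" unfolding positive_def f_def using R_empty by simp
  have add: "additive (sets M) f" unfolding additive_def f_def
    using R_add R01 by (auto simp: ennreal_plus[symmetric] simp del: ennreal_plus)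
  have ca: "countably_additive (sets M) f"
  proof (rule sets.empty_continuous_imp_countably_additive[OF pos add])
    show "\<forall>A\<in>sets M. f A \<noteq> \<infinity>" unfolding f_def by simp
    fix A :: "nat \<Rightarrow> 'a set" assume A: "range A \<subseteq> sets M" "decseq A" "(\<Inter>i. A i) = {}"
    then show "(\<lambda>i. f (A i)) \<longlonglongrightarrow> 0" unfolding f_def
      using tendsto_ennrealI[OF R_cont[OF A]] by simp
  qed
  define Rm where "Rm = measure_of (space M) (sets M) f"
  have sa: "sigma_algebra (space M) (sets M)" by (rule sets.sigma_algebra_axioms)
  have sRm: "sets Rm = sets M" unfolding Rm_def by (simp add: sets.space_closed)
  have spRm: "space Rm = space M" unfolding Rm_def by (simp add: sets.space_closed)
  have emRm: "emeasure Rm B = ennreal (R B)" if "B \<in> sets M" for B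
    unfolding Rm_def using emeasure_measure_of_sigma[OF sa pos ca that] f_def by simp
  have mRm: "measure Rm B = R B" if "B \<in> sets M" for B
    using emRm[OF that] R01[of B] by (simp add: measure_def)
  have pRm: "prob_space Rm"
    by (rule prob_spaceI) (simp add: spRm emRm R_space)
  have inC: "Rm \<in> core M V"
    unfolding core_def probs_on_def using pRm sRm mRm R_le_V by auto
  have invRm: "invariant_prob M T Rm"
    unfolding invariant_prob_def T_invariant_fun_def probs_on_def
    using pRm sRm mRm R_G G_sets by (auto simp: G_def)
  show ?thesis using inC invRm mRm R_inv Inv_sets by auto
qed

end

context erg_setting begin

lemma invD: "invariant_prob M T P \<Longrightarrow> B \<in> sets M \<Longrightarrow> measure P (G B) = measure P B"
  unfolding invariant_prob_def T_invariant_fun_def G_def by auto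

lemma cond_props:
  assumes R: "prob_space R" "sets R = sets M"
    and inv: "\<And>B. B \<in> sets M \<Longrightarrow> measure R (G B) = measure R B"
    and C: "C \<in> Inv" and pos: "measure R C > 0"
  shows "prob_space (uniform_measure R C)" "sets (uniform_measure R C) = sets M"
    "\<forall>B\<in>sets M. measure (uniform_measure R C) B = measure R (C \<inter> B) / measure R C"
    "\<forall>B\<in>sets M. measure (uniform_measure R C) (G B) = measure (uniform_measure R C) B"
    "measure (uniform_measure R C) C = 1"
proof -
  define U where "U = uniform_measure R C"
  interpret R: prob_space R by fact
  have Cs: "C \<in> sets M" using C Inv_sets by simp
  have e1: "emeasure R C \<noteq> 0" using pos R.emeasure_eq_measure by simp
  have e2: "emeasure R C \<noteq> \<infinity>" by simp
  show "prob_space (uniform_measure R C)" by (rule prob_space_uniform_measure[OF e1 e2])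
  show sU: "sets (uniform_measure R C) = sets M" using R(2) by simp
  have mU: "measure U B = measure R (C \<inter> B) / measure R C" if "B \<in> sets M" for B
    unfolding U_def using measure_uniform_measure[OF e1 e2] that R(2) by (simp add: Int_commute)
  then show "\<forall>B\<in>sets M. measure (uniform_measure R C) B = measure R (C \<inter> B) / measure R C"
    unfolding U_def by blast
  have "measure U (G B) = measure U B" if B: "B \<in> sets M" for B
  proof -
    have "C \<inter> G B = G (C \<inter> B)" using Inv_G[OF C] by (simp add: G_Int)
    then show ?thesis using mU[OF B] mU[OF G_sets[OF B]] inv[of "C \<inter> B"] B Cs by simp
  qed
  then show "\<forall>B\<in>sets M. measure (uniform_measure R C) (G B) = measure (uniform_measure R C) B"
    unfolding U_def by blast
  show "measure (uniform_measure R C) C = 1" using mU[OF Cs] pos unfolding U_def by simp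
qed

lemma cond_exists:
  assumes C: "atom C" and e: "e > 0"
  shows "\<exists>U. prob_space U \<and> sets U = sets M \<and> (\<forall>B\<in>sets M. measure U (G B) = measure U B)
     \<and> measure U C = 1 \<and> (\<forall>S\<in>sets M. V S = 0 \<longrightarrow> measure U S = 0)
     \<and> (\<forall>B\<in>sets M. measure U B \<le> V B + e)"
proof -
  have CI: "C \<in> Inv" and VC: "V C = 1" using C atom_Inv atom_V by auto
  have Cs: "C \<in> sets M" using CI Inv_sets by simp
  obtain Q where Q: "Q \<in> core M V" "measure Q C > V C - min e (1/2)"
    using core_approx[OF Cs, of "min e (1/2)"] e by auto
  obtain R where R: "R \<in> core M V" "invariant_prob M T R" "\<forall>A\<in>Inv. measure R A = measure Q A"
    using inv_measure_exists[OF Q(1)] by blast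
  have RC: "measure R C > 1 - min e (1/2)" using R(3) CI Q(2) VC by simp
  then have pos: "measure R C > 0" by linarith
  note RD = core_D[OF R(1)]
  define U where "U = uniform_measure R C"
  note UP = cond_props[OF RD(1,2) invD[OF R(2)] CI pos, folded U_def]
  interpret R: prob_space R by (rule RD(1))
  have bound: "measure U B \<le> V B + e" if B: "B \<in> sets M" for B
  proof -
    have "measure R (C \<inter> B) \<le> measure R B" using B Cs RD(2) by (intro R.finite_measure_mono) auto
    also have "\<dots> \<le> V B" using RD(4) B by simp
    finally have a: "measure U B * measure R C \<le> V B" using UP(3) B pos by simp
    have "measure U B \<le> 1" using UP(1) prob_space.prob_le_1 by blast
    moreover have "0 \<le> measure U B" by simp
    moreover have "0 \<le> 1 - measure R C" using R.prob_le_1[of C] by simp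
    ultimately have "measure U B * (1 - measure R C) \<le> 1 * (1 - measure R C)"
      by (intro mult_right_mono) auto
    then have "measure U B * (1 - measure R C) \<le> 1 - measure R C" by simp
    then have "measure U B * (1 - measure R C) \<le> min e (1/2)" using RC by linarith
    then show ?thesis using a by (simp add: algebra_simps)
  qed
  have null: "measure U S = 0" if S: "S \<in> sets M" "V S = 0" for S
  proof -
    have "measure R (C \<inter> S) \<le> measure R S" using S Cs RD(2) by (intro R.finite_measure_mono) auto
    also have "\<dots> = 0" using V_zero_null[OF R(1) S] .
    finally have "measure R (C \<inter> S) = 0" using measure_nonneg[of R "C \<inter> S"] by linarith
    then show ?thesis using UP(3) S(1) by simp
  qed
  show ?thesis using UP bound null by blast
qed

lemma ergodic_on_atom:
  assumes C: "atom C"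
  shows "\<exists>E\<in>core M V. ergodic_prob M T E \<and> measure E C = 1"
proof -
  have CI: "C \<in> Inv" using C atom_Inv by auto
  obtain U where U: "prob_space U" "sets U = sets M" "\<forall>B\<in>sets M. measure U (G B) = measure U B"
     "measure U C = 1" "\<forall>S\<in>sets M. V S = 0 \<longrightarrow> measure U S = 0"
    using cond_exists[OF C, of 1] by auto
  have valsU: "measure U A = (if V (A \<inter> C) = 0 then 0 else 1)" if "A \<in> Inv" for A
    using atom_values[OF C U(1,2) _ U(4) that] U(5) by blast
  have le: "measure U B \<le> V B" if B: "B \<in> sets M" for B
  proof -
    have "measure U B \<le> V B + e" if e: "e > 0" for e
    proof -
      obtain W where W: "prob_space W" "sets W = sets M" "\<forall>B\<in>sets M. measure W (G B) = measure W B"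
         "measure W C = 1" "\<forall>S\<in>sets M. V S = 0 \<longrightarrow> measure W S = 0"
         "\<forall>B\<in>sets M. measure W B \<le> V B + e"
        using cond_exists[OF C e] by auto
      have valsW: "measure W A = (if V (A \<inter> C) = 0 then 0 else 1)" if "A \<in> Inv" for A
        using atom_values[OF C W(1,2) _ W(4) that] W(5) by blast
      have "measure U B = measure W B"
        using unique_inv[OF U(1,2) W(1,2) _ _ _ B] U(3) W(3) valsU valsW by simp
      then show ?thesis using W(6) B by simp
    qed
    then show ?thesis by (rule field_le_epsilon)
  qed
  have inC: "U \<in> core M V" unfolding core_def probs_on_def using U(1,2) le by auto
  have erg: "ergodic_prob M T U"
    unfolding ergodic_prob_def invariant_prob_def T_invariant_fun_def T_ergodic_fun_def probs_on_def
    using U(1,2,3) valsU by (auto simp: G_def Inv_def)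
  show ?thesis using inC erg U(4) by blast
qed

lemma ergD:
  assumes "ergodic_prob M T E" "A \<in> Inv"
  shows "measure E A = 0 \<or> measure E A = 1"
  using assms unfolding ergodic_prob_def T_ergodic_fun_def Inv_def by auto

lemma erg_atom:
  assumes E: "E \<in> core M V" "ergodic_prob M T E"
  shows "\<exists>C. atom C \<and> measure E C = 1"
proof -
  interpret E: prob_space E using core_D(1)[OF E(1)] .
  note ED = core_D[OF E(1)]
  have "\<exists>C. atom C \<and> C \<subseteq> space M \<and> (C \<in> Inv \<and> measure E C = 1)"
  proof (rule atom_exists_gen[where Pr = "\<lambda>S. S \<in> Inv \<and> measure E S = 1"])
    fix S assume S: "S \<in> Inv \<and> measure E S = 1"
    have "V S \<ge> 1" using ED(4)[of S] S Inv_sets by fastforce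
    then show "S \<in> Inv \<and> V S = 1" using S V_le1[of S] Inv_sets by fastforce
  next
    fix S assume S: "S \<in> Inv \<and> measure E S = 1" and na: "\<not> atom S"
    have "V S \<ge> 1" using ED(4)[of S] S Inv_sets by fastforce
    then have VS: "V S = 1" using S V_le1[of S] Inv_sets by fastforce
    then obtain S' where S': "S' \<in> Inv" "S' \<subseteq> S" "V S' \<noteq> 0" "V (S - S') \<noteq> 0"
      using na S unfolding atom_def by auto
    have Ss: "S \<in> sets M" "S' \<in> sets M" using S S' Inv_sets by auto
    consider "measure E S' = 1" | "measure E S' = 0" using ergD[OF E(2) S'(1)] by auto
    then show "\<exists>S''. (S'' \<in> Inv \<and> measure E S'' = 1) \<and> S'' \<subseteq> S \<and> V (S - S'') = 1"
    proof cases
      case 1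
      then show ?thesis using S' V_Inv_pos Inv_diff S by blast
    next
      case 2
      have "measure E (S - S') = 1"
        using E.finite_measure_Diff[of S S'] Ss ED(2) S' 2 S by simp
      moreover have "S - (S - S') = S'" using S' by auto
      ultimately show ?thesis using S' V_Inv_pos Inv_diff S by (metis Diff_subset)
    qed
  qed (auto simp: Inv_space E.prob_space[unfolded ED(3)])
  then show ?thesis by blast
qed

lemma core_null: "P \<in> core M V \<Longrightarrow> S \<in> sets M \<Longrightarrow> V S = 0 \<Longrightarrow> measure P S = 0"
  by (rule V_zero_null)

lemma erg_unique:
  assumes E: "E \<in> core M V" "ergodic_prob M T E" and E': "E' \<in> core M V" "ergodic_prob M T E'"
    and C: "atom C" "measure E C = 1" "measure E' C = 1"
  shows "E = E'"
proof -
  note ED = core_D[OF E(1)] and ED' = core_D[OF E'(1)]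
  have iE: "invariant_prob M T E" "invariant_prob M T E'" using E(2) E'(2) ergodic_prob_def by auto
  have v: "measure E A = measure E' A" if "A \<in> Inv" for A
    using atom_values[OF C(1) ED(1,2) core_null[OF E(1)] C(2) that]
      atom_values[OF C(1) ED'(1,2) core_null[OF E'(1)] C(3) that] by simp
  have eq: "measure E B = measure E' B" if "B \<in> sets M" for B
    using unique_inv[OF ED(1,2) ED'(1,2) invD[OF iE(1)] invD[OF iE(2)] v that] .
  show ?thesis
  proof (rule measure_eqI)
    show "sets E = sets E'" using ED(2) ED'(2) by simp
    fix B
    interpret E1: prob_space E by (rule ED(1))
    interpret E2: prob_space E' by (rule ED'(1))
    assume "B \<in> sets E"
    then show "emeasure E B = emeasure E' B"
      using eq ED(2) E1.emeasure_eq_measure E2.emeasure_eq_measure by simp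
  qed
qed

lemma erg_sep:
  assumes E: "E \<in> core M V" "ergodic_prob M T E" and E': "E' \<in> core M V" "ergodic_prob M T E'"
    and C: "atom C" "measure E C = 1" and C': "atom C'" "measure E' C' = 1" and ne: "E \<noteq> E'"
  shows "measure E C' = 0"
proof -
  interpret E: prob_space E using core_D(1)[OF E(1)] .
  note ED = core_D[OF E(1)]
  have CI: "C \<in> Inv" "C' \<in> Inv" using C(1) C'(1) atom_Inv by auto
  have Cs: "C \<in> sets M" "C' \<in> sets M" using CI Inv_sets by auto
  have CC: "C \<inter> C' \<in> Inv" using CI Inv_Int by auto
  have V0: "V (C \<inter> C') = 0"
  proof (rule ccontr)
    assume nz: "V (C \<inter> C') \<noteq> 0"
    then have V1: "V (C \<inter> C') = 1" using V_Inv_pos CC by blast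
    have at: "atom (C \<inter> C')" using atom_sub[OF C(1) CC _ V1] by auto
    have "V (C - C \<inter> C') = 0" using C(1) CC nz unfolding atom_def by auto
    then have "measure E (C - C \<inter> C') = 0" using core_null[OF E(1)] Cs by auto
    then have m1: "measure E (C \<inter> C') = 1"
      using E.finite_measure_Diff[of C "C \<inter> C'"] Cs ED(2) C(2) by auto
    interpret E': prob_space E' using core_D(1)[OF E'(1)] .
    note ED' = core_D[OF E'(1)]
    have "V (C' - C \<inter> C') = 0" using C'(1) CC nz unfolding atom_def by auto
    then have "measure E' (C' - C \<inter> C') = 0" using core_null[OF E'(1)] Cs by auto
    then have m2: "measure E' (C \<inter> C') = 1"
      using E'.finite_measure_Diff[of C' "C \<inter> C'"] Cs ED'(2) C'(2) by (auto simp: Int_commute)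
    have "E = E'" using erg_unique[OF E E' at m1 m2] .
    then show False using ne by simp
  qed
  have a: "measure E (C' \<inter> C) = 0" using core_null[OF E(1)] V0 Cs by (auto simp: Int_commute)
  have "measure E (C' - C) \<le> measure E (space M - C)"
    using Cs ED(2) sets.sets_into_space[OF Cs(2)] by (intro E.finite_measure_mono) auto
  also have "\<dots> = 0" using E.finite_measure_compl[of C] Cs ED C(2) E.prob_space by simp
  finally have b: "measure E (C' - C) = 0" using measure_nonneg[of E "C' - C"] by linarith
  show ?thesis using E.finite_measure_Diff'[of C' C] Cs ED(2) a b by simp
qed

end

context erg_setting begin

definition Erg :: "'a measure set" where "Erg = {P \<in> core M V. ergodic_prob M T P}"

definition atomof :: "'a measure \<Rightarrow> 'a set" where
  "atomof E = (SOME C. atom C \<and> measure E C = 1)"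

lemma atomof: "E \<in> Erg \<Longrightarrow> atom (atomof E) \<and> measure E (atomof E) = 1"
  unfolding atomof_def Erg_def by (rule someI_ex) (auto intro: erg_atom)

lemma atomof_other: "E \<in> Erg \<Longrightarrow> E' \<in> Erg \<Longrightarrow> E \<noteq> E' \<Longrightarrow> measure E (atomof E') = 0"
  using erg_sep atomof unfolding Erg_def by blast

lemma Inv_UN:
  assumes "countable I" "\<And>i. i \<in> I \<Longrightarrow> A i \<in> Inv"
  shows "(\<Union>i\<in>I. A i) \<in> Inv"
proof -
  have "(\<Union>i\<in>I. A i) \<in> sets M" using assms Inv_sets by (intro sets.countable_UN') auto
  moreover have "G (\<Union>i\<in>I. A i) = (\<Union>i\<in>I. A i)"
  proof -
    have "G (\<Union>i\<in>I. A i) = (\<Union>i\<in>I. G (A i))" unfolding G_def by auto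
    also have "\<dots> = (\<Union>i\<in>I. A i)" using assms(2) Inv_G by simp
    finally show ?thesis .
  qed
  ultimately show ?thesis by (simp add: Inv_iff)
qed

lemma null_UN:
  assumes P: "prob_space P" "sets P = sets M" and I: "finite I"
    and A: "\<And>i. i \<in> I \<Longrightarrow> A i \<in> sets M" "\<And>i. i \<in> I \<Longrightarrow> measure P (A i) = 0"
  shows "measure P (\<Union>i\<in>I. A i) = 0"
proof -
  have "measure P (\<Union>i\<in>I. A i) \<le> (\<Sum>i\<in>I. measure P (A i))"
    using I A P(2) by (intro measure_UNION_le) auto
  also have "\<dots> = 0" using A by simp
  finally show ?thesis using measure_nonneg[of P] by (meson order_antisym)
qed

lemma diff_null_one:
  assumes P: "prob_space P" "sets P = sets M" and C: "C \<in> sets M" "measure P C = 1"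
    and U: "U \<in> sets M" "measure P U = 0"
  shows "measure P (C - U) = 1"
proof -
  interpret prob_space P by fact
  have "measure P (C \<inter> U) \<le> measure P U" using C U P(2) by (intro finite_measure_mono) auto
  then have "measure P (C \<inter> U) = 0" using U measure_nonneg[of P "C \<inter> U"] by linarith
  then show ?thesis using finite_measure_Diff'[of C U] C U P(2) by simp
qed

lemma finite_Erg: "finite Erg"
proof (rule ccontr)
  assume "infinite Erg"
  then have "\<exists>f::nat \<Rightarrow> 'a measure. inj f \<and> range f \<subseteq> Erg"
    by (simp add: infinite_iff_countable_subset)
  then obtain f :: "nat \<Rightarrow> 'a measure" where f: "inj f" "range f \<subseteq> Erg"
    by blast
  define C where "C n = atomof (f n)" for n
  define X where "X n = C n - (\<Union>m\<in>{..<n}. C m)" for n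
  have fE: "f n \<in> Erg" for n using f by auto
  have CI: "C n \<in> Inv" for n using atomof[OF fE] atom_Inv unfolding C_def by auto
  have Cs: "C n \<in> sets M" for n using CI Inv_sets by auto
  have XI: "X n \<in> Inv" for n
  proof -
    have "(\<Union>m\<in>{..<n}. C m) \<in> Inv" by (rule Inv_UN) (simp_all add: CI)
    then show ?thesis unfolding X_def using CI by (rule Inv_diff[rotated])
  qed
  have fX: "measure (f n) (X n) = 1" for n
  proof -
    have fc: "f n \<in> core M V" using fE[of n] unfolding Erg_def by auto
    note fD = core_D[OF fc]
    have "measure (f n) (C m) = 0" if "m < n" for m
    proof -
      have "n \<noteq> m" using that by simp
      then have "f n \<noteq> f m" using f(1) by (simp add: inj_eq)
      then show ?thesis unfolding C_def using atomof_other fE by blast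
    qed
    then have "measure (f n) (\<Union>m\<in>{..<n}. C m) = 0"
      using null_UN[OF fD(1,2), of "{..<n}" C] Cs by blast
    moreover have "measure (f n) (C n) = 1" using atomof[OF fE] unfolding C_def by auto
    moreover have "(\<Union>m\<in>{..<n}. C m) \<in> sets M" using Cs by auto
    ultimately show ?thesis unfolding X_def using diff_null_one[OF fD(1,2) Cs] by blast
  qed
  have VX: "V (X n) = 1" for n
  proof -
    have fc: "f n \<in> core M V" using fE[of n] unfolding Erg_def by auto
    have Xs: "X n \<in> sets M" using XI Inv_sets by blast
    have "1 \<le> V (X n)" using core_D(4)[OF fc Xs] fX[of n] by simp
    then show ?thesis using V_le1[OF Xs] by linarith
  qed
  have disj: "disjoint_family X"
    unfolding disjoint_family_on_def
  proof (intro ballI impI)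
    fix m n :: nat assume "m \<noteq> n"
    then consider "m < n" | "n < m" by linarith
    then show "X m \<inter> X n = {}"
    proof cases
      case 1
      then have "C m \<subseteq> (\<Union>k\<in>{..<n}. C k)" by blast
      then show ?thesis unfolding X_def by blast
    next
      case 2
      then have "C n \<subseteq> (\<Union>k\<in>{..<m}. C k)" by blast
      then show ?thesis unfolding X_def by blast
    qed
  qed
  show False using no_inf_disjoint[OF XI disj VX] .
qed

definition Dset :: "'a measure \<Rightarrow> 'a set" where
  "Dset E = atomof E - (\<Union>E'\<in>Erg - {E}. atomof E')"

lemma Dset_props:
  assumes E: "E \<in> Erg"
  shows "Dset E \<in> Inv" "measure E (Dset E) = 1" "atom (Dset E)"
proof -
  have aI: "atomof E' \<in> Inv" if "E' \<in> Erg" for E' using atomof[OF that] atom_Inv by auto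
  show DI: "Dset E \<in> Inv" unfolding Dset_def using aI E finite_Erg
    by (intro Inv_diff Inv_UN) (auto intro: countable_finite)
  have Ec: "E \<in> core M V" using E unfolding Erg_def by auto
  note ED = core_D[OF Ec]
  have "measure E (\<Union>E'\<in>Erg - {E}. atomof E') = 0"
    using null_UN[OF ED(1,2), of "Erg - {E}" atomof] finite_Erg aI Inv_sets atomof_other[OF E] by auto
  moreover have "(\<Union>E'\<in>Erg - {E}. atomof E') \<in> sets M"
    using aI Inv_sets finite_Erg by (intro sets.finite_UN) auto
  ultimately show m1: "measure E (Dset E) = 1"
    unfolding Dset_def using diff_null_one[OF ED(1,2)] atomof[OF E] aI[OF E] Inv_sets by blast
  have "1 \<le> V (Dset E)" using ED(4)[of "Dset E"] m1 DI Inv_sets by simp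
  then have V1: "V (Dset E) = 1" using V_le1[of "Dset E"] DI Inv_sets by fastforce
  show "atom (Dset E)" using atom_sub[OF conjunct1[OF atomof[OF E]] DI _ V1] unfolding Dset_def by auto
qed

lemma Dset_disj: "disjoint_family_on Dset Erg"
  unfolding disjoint_family_on_def Dset_def by blast

lemma decompose:
  assumes P: "P \<in> core M V" "invariant_prob M T P"
  shows "P \<in> prob_convex_hull M Erg"
proof -
  note PD = core_D[OF P(1)]
  interpret P: prob_space P by (rule PD(1))
  have DI: "Dset E \<in> Inv" if "E \<in> Erg" for E using Dset_props[OF that] by simp
  have Ds: "Dset E \<in> sets M" if "E \<in> Erg" for E using DI[OF that] Inv_sets by simp
  define U where "U = (\<Union>E\<in>Erg. Dset E)"
  have UI: "U \<in> Inv" unfolding U_def using DI finite_Erg by (intro Inv_UN) (auto intro: countable_finite)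
  define Y where "Y = space M - U"
  have YI: "Y \<in> Inv" unfolding Y_def using UI Inv_space Inv_diff by simp
  have Ys: "Y \<in> sets M" using YI Inv_sets by simp
  have PY: "measure P Y = 0"
  proof (rule ccontr)
    assume "measure P Y \<noteq> 0"
    then have "measure P Y > 0" using measure_nonneg[of P Y] by linarith
    then have "V Y > 0" using PD(4)[OF Ys] by linarith
    then have "V Y = 1" using V_Inv_pos[OF YI] by simp
    then obtain C where C: "atom C" "C \<subseteq> Y" using atom_exists[OF YI] by blast
    obtain E where E: "E \<in> core M V" "ergodic_prob M T E" "measure E C = 1"
      using ergodic_on_atom[OF C(1)] by blast
    have EE: "E \<in> Erg" using E unfolding Erg_def by auto
    interpret E: prob_space E using core_D(1)[OF E(1)] .
    have Cs: "C \<in> sets M" using C(1) atom_Inv Inv_sets by auto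
    have disj: "C \<inter> Dset E = {}" using C(2) EE unfolding Y_def U_def by auto
    have "measure E (C \<union> Dset E) = measure E C + measure E (Dset E)"
      using Cs Ds[OF EE] disj core_D(2)[OF E(1)] by (intro E.finite_measure_Union) auto
    also have "\<dots> = 2" using E(3) Dset_props(2)[OF EE] by simp
    finally show False using E.prob_le_1[of "C \<union> Dset E"] by simp
  qed
  have piece: "measure P (Dset E \<inter> B) = measure P (Dset E) * measure E B"
    if E: "E \<in> Erg" and B: "B \<in> sets M" for E B
  proof (cases "measure P (Dset E) = 0")
    case True
    have "measure P (Dset E \<inter> B) \<le> measure P (Dset E)"
      using Ds[OF E] B PD(2) by (intro P.finite_measure_mono) auto
    then show ?thesis using True measure_nonneg[of P "Dset E \<inter> B"] by simp
  next
    case False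
    then have pos: "measure P (Dset E) > 0" using measure_nonneg[of P "Dset E"] by linarith
    note W = cond_props[OF PD(1,2) invD[OF P(2)] DI[OF E] pos]
    define Wm where "Wm = uniform_measure P (Dset E)"
    have Ec: "E \<in> core M V" and Ee: "ergodic_prob M T E" using E unfolding Erg_def by auto
    note ED = core_D[OF Ec]
    have at: "atom (Dset E)" using Dset_props[OF E] by simp
    have nullW: "measure Wm S = 0" if S: "S \<in> sets M" "V S = 0" for S
    proof -
      have "measure P (Dset E \<inter> S) \<le> measure P S"
        using Ds[OF E] S PD(2) by (intro P.finite_measure_mono) auto
      also have "\<dots> = 0" using core_null[OF P(1) S] .
      finally have "measure P (Dset E \<inter> S) = 0" using measure_nonneg[of P "Dset E \<inter> S"] by linarith
      then show ?thesis using W(3) S(1) unfolding Wm_def by simp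
    qed
    have vW: "measure Wm A = (if V (A \<inter> Dset E) = 0 then 0 else 1)" if "A \<in> Inv" for A
      using atom_values[OF at W(1,2)[folded Wm_def] nullW W(5)[folded Wm_def] that] by blast
    have vE: "measure E A = (if V (A \<inter> Dset E) = 0 then 0 else 1)" if "A \<in> Inv" for A
      using atom_values[OF at ED(1,2) core_null[OF Ec] Dset_props(2)[OF E] that] by blast
    have iE: "invariant_prob M T E" using Ee ergodic_prob_def by auto
    have agreeWE: "measure Wm A = measure E A" if "A \<in> Inv" for A
      using vW[OF that] vE[OF that] by simp
    have invW: "measure Wm (G S) = measure Wm S" if "S \<in> sets M" for S
      using W(4) that unfolding Wm_def by blast
    have "measure Wm B = measure E B"
      by (rule unique_inv[OF W(1,2)[folded Wm_def] ED(1,2) invW invD[OF iE] agreeWE B])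
    moreover have "measure Wm B = measure P (Dset E \<inter> B) / measure P (Dset E)"
      using W(3) B unfolding Wm_def by blast
    ultimately have "measure P (Dset E \<inter> B) / measure P (Dset E) = measure E B" by simp
    then show ?thesis using pos by (simp add: divide_eq_eq mult.commute)
  qed
  have Us: "U \<in> sets M" using UI Inv_sets by simp
  have total: "measure P B = (\<Sum>E\<in>Erg. measure P (Dset E) * measure E B)" if B: "B \<in> sets M" for B
  proof -
    have "measure P (B - U) \<le> measure P Y"
      unfolding Y_def using B Us PD(2) sets.sets_into_space[OF B] by (intro P.finite_measure_mono) auto
    then have "measure P (B - U) = 0" using PY measure_nonneg[of P "B - U"] by linarith
    then have e1: "measure P B = measure P (B \<inter> U)"
      using P.finite_measure_Diff'[of B U] B Us PD(2) by simp
    have e2: "B \<inter> U = (\<Union>E\<in>Erg. Dset E \<inter> B)" unfolding U_def by blast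
    have dj: "disjoint_family_on (\<lambda>E. Dset E \<inter> B) Erg"
      using Dset_disj unfolding disjoint_family_on_def by blast
    have e3: "measure P (\<Union>E\<in>Erg. Dset E \<inter> B) = (\<Sum>E\<in>Erg. measure P (Dset E \<inter> B))"
    proof (rule measure_finite_Union[OF finite_Erg _ dj])
      show "(\<lambda>E. Dset E \<inter> B) ` Erg \<subseteq> sets P" using Ds B PD(2) by blast
    qed simp
    have e4: "(\<Sum>E\<in>Erg. measure P (Dset E \<inter> B)) = (\<Sum>E\<in>Erg. measure P (Dset E) * measure E B)"
      using piece B by (intro sum.cong) auto
    show ?thesis using e1 e2 e3 e4 by simp
  qed
  have sum1: "(\<Sum>E\<in>Erg. measure P (Dset E)) = 1"
  proof -
    have "measure E (space M) = 1" if "E \<in> Erg" for E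
      using that core_D[of E] prob_space.prob_space unfolding Erg_def by fastforce
    then have "(\<Sum>E\<in>Erg. measure P (Dset E)) = (\<Sum>E\<in>Erg. measure P (Dset E) * measure E (space M))"
      by simp
    also have "\<dots> = measure P (space M)" using total[of "space M"] by simp
    also have "\<dots> = 1" using P.prob_space PD(3) by simp
    finally show ?thesis .
  qed
  have Pp: "P \<in> probs_on M" using P(2) unfolding invariant_prob_def by blast
  have nn: "\<forall>Q\<in>Erg. 0 \<le> measure P (Dset Q)" by simp
  have ex: "\<exists>F c. finite F \<and> F \<subseteq> Erg \<and> (\<forall>Q\<in>F. 0 \<le> c Q) \<and> (\<Sum>Q\<in>F. c Q) = (1::real) \<and>
      (\<forall>A\<in>sets M. measure P A = (\<Sum>Q\<in>F. c Q * measure Q A))"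
  proof (intro exI[of _ Erg] exI[of _ "\<lambda>Q. measure P (Dset Q)"] conjI)
    show "\<forall>A\<in>sets M. measure P A = (\<Sum>Q\<in>Erg. measure P (Dset Q) * measure Q A)"
      using total by blast
  qed (use finite_Erg sum1 in auto)
  show ?thesis using Pp ex by (simp add: prob_convex_hull_def)
qed

lemma hull_sub:
  assumes P: "P \<in> prob_convex_hull M Erg"
  shows "P \<in> core M V \<and> invariant_prob M T P"
proof -
  obtain F c where F: "finite F" "F \<subseteq> Erg" "\<forall>Q\<in>F. 0 \<le> c Q" "(\<Sum>Q\<in>F. c Q) = 1"
    "\<forall>A\<in>sets M. measure P A = (\<Sum>Q\<in>F. c Q * measure Q A)" and Pp: "P \<in> probs_on M"
    using P unfolding prob_convex_hull_def by blast
  have Fc: "Q \<in> core M V" "invariant_prob M T Q" if "Q \<in> F" for Q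
    using F(2) that unfolding Erg_def ergodic_prob_def by auto
  have le: "measure P A \<le> V A" if A: "A \<in> sets M" for A
  proof -
    have "measure P A = (\<Sum>Q\<in>F. c Q * measure Q A)" using F(5) A by simp
    also have "\<dots> \<le> (\<Sum>Q\<in>F. c Q * V A)"
      using F(3) core_D(4)[OF Fc(1) A] by (intro sum_mono mult_left_mono) auto
    also have "\<dots> = V A" using F(4) by (simp add: sum_distrib_right[symmetric])
    finally show ?thesis .
  qed
  have inv: "measure P (G A) = measure P A" if A: "A \<in> sets M" for A
    using F(5) A G_sets[OF A] invD[OF Fc(2)] by simp
  show ?thesis using Pp le inv unfolding core_def invariant_prob_def T_invariant_fun_def
    by (auto simp: G_def)
qed

lemma main: "finite Erg \<and> {P \<in> core M V. invariant_prob M T P} = prob_convex_hull M Erg"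
  using finite_Erg decompose hull_sub by blast

end

theorem theorem3p3:
  fixes M :: "'a measure" and T :: "'a \<Rightarrow> 'a" and V :: "'a set \<Rightarrow> real"
  assumes "T \<in> measurable M M"
    and "upper_probability M V"
    and "continuous_capacity M V"
    and "T_invariant_fun M T V"
    and "T_ergodic_fun M T V"
  shows "finite {P \<in> core M V. ergodic_prob M T P}
    \<and> {P \<in> core M V. invariant_prob M T P}
        = prob_convex_hull M {P \<in> core M V. ergodic_prob M T P}"
proof -
  interpret erg_setting M T V using assms by (rule erg_setting.intro)
  show ?thesis using main unfolding Erg_def .
qed

end
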